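(* Let $\mathcal R_5=\{(wx,x):w\in\{0,1\}^*,\ x\in\{0,1\}\}\subseteq\{0,1\}^*\times\{0,1\}^*$. Then $\mathcal R_5$ cannot be computed by a quantum finite state transducer with an isolated cutpoint, while it is computed by a deterministic finite state transducer.
   Context: A probabilistic finite state transducer (pfst) is a tuple $T=(Q,\Sigma_1,\Sigma_2,V,f,q_0,Q_{\rm acc},Q_{\rm rej})$ with finite state set $Q$, finite input/output alphabets $\Sigma_1,\Sigma_2$, initial state $q_0$, disjoint accepting/rejecting sets $Q_{\rm acc},Q_{\rm rej}\subseteq Q$ (the other states are non-halting). For each $a\in\Sigma_1\cup\{\ddagger,\$\}$ ($\ddagger,\$$ are end markers) there is a stochastic $Q\times Q$ matrix $V_a$ and an output function $f_a:Q\to\Sigma_2^*$; $V_\$$ puts all probability on halting states. On input $v$ the machine reads $\ddagger v\$$; in state $q$ reading $a$ it appends $f_a(q)$ to the output tape and moves to state $p$ with probability $(V_a)_{qp}$; if $p$ is accepting (rejecting) it halts and accepts with the current output (rejects). $T(w|v)$ is the probability of accepting with output $w$ on input $v$. A deterministic finite state transducer (dfst) is a pfst all of whose matrix entries are $0$ or $1$; it computes $\mathcal R$ if $T(w|v)=1$ for $(v,w)\in\mathcal R$ and $T(w|v)=0$ otherwise. A quantum finite state transducer (qfst) has the same data except that each $V_a$ is a unitary on $\ell^2(Q)$ (and $V_\$$ maps the span of non-halting states into the span of halting states). Its non-halting part is a vector $\psi=\sum_{q,w}\alpha_{qw}|q\rangle\otimes|w\rangle\in\ell^2(Q\times\Sigma_2^*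 )$, initially $|q_0\rangle\otimes|\epsilon\rangle$; reading $a$ maps it to $\psi'=\sum_{q,w}\alpha_{qw}V_a|q\rangle\otimes|wf_a(q)\rangle$ with $V_a|q\rangle=\sum_p(V_a)_{qp}|p\rangle$, after which the squared norm of the component of $\psi'$ on $\mathrm{span}(Q_{\rm acc})\otimes|x\rangle$ is added to the probability of accepting with output $x$, the squared norm of the component on $\mathrm{span}(Q_{\rm rej})\otimes\ell^2(\Sigma_2^* )$ to the rejection probability, and the computation continues with the projection onto non-halting states. $T(w|v)$ is defined analogously. $T$ computes $\mathcal R$ with isolated cutpoint if there are $0<\alpha<1$ and $\varepsilon>0$ such that for all $v,w$: $(v,w)\in\mathcal R\Rightarrow T(w|v)\ge\alpha+\varepsilon$ and $(v,w)\notin\mathcal R\Rightarrow T(w|v)\le\alpha-\varepsilon$. *)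

theory Defs
  imports Complex_Main "HOL-Library.Sublist"
begin

datatype 'a tsym = Sym 'a | LEnd | REnd

text \<open>A finite state transducer with states 0..n-1. trans a q p is the (q,p) entry
  of the matrix V_a (entries of type 'c: real for pfst/dfst, complex for qfst);
  out a q is f_a(q).\<close>
record ('a, 'b, 'c) fst =
  nstates :: nat
  trans :: "'a tsym \<Rightarrow> nat \<Rightarrow> nat \<Rightarrow> 'c"
  out :: "'a tsym \<Rightarrow> nat \<Rightarrow> 'b list"
  init :: nat
  acc :: "nat set"
  rej :: "nat set"

definition halting :: "('a, 'b, 'c) fst \<Rightarrow> nat \<Rightarrow> bool" where
  "halting T q \<longleftrightarrow> q \<in> acc T \<or> q \<in> rej T"

definition well_formed :: "('a, 'b, 'c) fst \<Rightarrow> bool" where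
  "well_formed T \<longleftrightarrow> init T < nstates T \<and> acc T \<subseteq> {..<nstates T} \<and>
     rej T \<subseteq> {..<nstates T} \<and> acc T \<inter> rej T = {}"

definition tape :: "'a list \<Rightarrow> 'a tsym list" where
  "tape v = LEnd # map Sym v @ [REnd]"

definition is_pfst :: "('a, 'b, real) fst \<Rightarrow> bool" where
  "is_pfst T \<longleftrightarrow> well_formed T \<and>
     (\<forall>a. \<forall>q<nstates T. (\<forall>p<nstates T. trans T a q p \<ge> 0) \<and>
                        (\<Sum>p<nstates T. trans T a q p) = 1) \<and>
     (\<forall>q<nstates T. \<forall>p<nstates T. \<not> halting T p \<longrightarrow> trans T REnd q p = 0)"

definition is_dfst :: "('a, 'b, real) fst \<Rightarrow> bool" where
  "is_dfst T \<longleftrightarrow> is_pfst T \<and>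
     (\<forall>a. \<forall>q<nstates T. \<forall>p<nstates T. trans T a q p = 0 \<or> trans T a q p = 1)"

text \<open>One step on configurations (state, output) \<Rightarrow> weight: reading a in state q,
  append out a q to the output, move to p with weight trans a q p.\<close>
definition pstep :: "('a, 'b, real) fst \<Rightarrow> 'a tsym \<Rightarrow> (nat \<Rightarrow> 'b list \<Rightarrow> real)
    \<Rightarrow> nat \<Rightarrow> 'b list \<Rightarrow> real" where
  "pstep T a mu p u = (\<Sum>q<nstates T.
      if suffix (out T a q) u
      then mu q (take (length u - length (out T a q)) u) * trans T a q p else 0)"

fun pacc :: "('a, 'b, real) fst \<Rightarrow> 'a tsym list \<Rightarrow> (nat \<Rightarrow> 'b list \<Rightarrow> real)
    \<Rightarrow> 'b list \<Rightarrow> real" where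
  "pacc T [] mu x = 0"
| "pacc T (a # as) mu x =
     (\<Sum>p\<in>acc T. pstep T a mu p x) +
     pacc T as (\<lambda>p u. if halting T p then 0 else pstep T a mu p u) x"

definition pprob :: "('a, 'b, real) fst \<Rightarrow> 'b list \<Rightarrow> 'a list \<Rightarrow> real" where
  "pprob T w v = pacc T (tape v) (\<lambda>q u. if q = init T \<and> u = [] then 1 else 0) w"

definition dfst_computes :: "('a, 'b, real) fst \<Rightarrow> ('a list \<times> 'b list) set \<Rightarrow> bool" where
  "dfst_computes T R \<longleftrightarrow> is_dfst T \<and>
     (\<forall>v w. pprob T w v = (if (v, w) \<in> R then 1 else 0))"

definition is_qfst :: "('a, 'b, complex) fst \<Rightarrow> bool" where
  "is_qfst T \<longleftrightarrow> well_formed T \<and>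
     (\<forall>a. \<forall>q<nstates T. \<forall>q'<nstates T.
        (\<Sum>p<nstates T. trans T a q p * cnj (trans T a q' p)) = (if q = q' then 1 else 0)) \<and>
     (\<forall>q<nstates T. \<forall>p<nstates T. \<not> halting T q \<and> \<not> halting T p \<longrightarrow> trans T REnd q p = 0)"

definition qstep :: "('a, 'b, complex) fst \<Rightarrow> 'a tsym \<Rightarrow> (nat \<Rightarrow> 'b list \<Rightarrow> complex)
    \<Rightarrow> nat \<Rightarrow> 'b list \<Rightarrow> complex" where
  "qstep T a psi p u = (\<Sum>q<nstates T.
      if suffix (out T a q) u
      then psi q (take (length u - length (out T a q)) u) * trans T a q p else 0)"

fun qacc :: "('a, 'b, complex) fst \<Rightarrow> 'a tsym list \<Rightarrow> (nat \<Rightarrow> 'b list \<Rightarrow> complex)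
    \<Rightarrow> 'b list \<Rightarrow> real" where
  "qacc T [] psi x = 0"
| "qacc T (a # as) psi x =
     (\<Sum>p\<in>acc T. (cmod (qstep T a psi p x))\<^sup>2) +
     qacc T as (\<lambda>p u. if halting T p then 0 else qstep T a psi p u) x"

definition qprob :: "('a, 'b, complex) fst \<Rightarrow> 'b list \<Rightarrow> 'a list \<Rightarrow> real" where
  "qprob T w v = qacc T (tape v) (\<lambda>q u. if q = init T \<and> u = [] then 1 else 0) w"

definition qfst_computes_isolated ::
    "('a, 'b, complex) fst \<Rightarrow> ('a list \<times> 'b list) set \<Rightarrow> bool" where
  "qfst_computes_isolated T R \<longleftrightarrow> is_qfst T \<and>
     (\<exists>\<alpha> \<epsilon>::real. 0 < \<alpha> \<and> \<alpha> < 1 \<and> \<epsilon> > 0 \<and>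
        (\<forall>v w. ((v, w) \<in> R \<longrightarrow> qprob T w v \<ge> \<alpha> + \<epsilon>) \<and>
               ((v, w) \<notin> R \<longrightarrow> qprob T w v \<le> \<alpha> - \<epsilon>)))"

definition R5 :: "(bool list \<times> bool list) set" where
  "R5 = {(w @ [x], [x]) | w x. True}"

end

theory Submission
  imports Defs
begin

lemma unit_sum:
  fixes V :: "nat \<Rightarrow> nat \<Rightarrow> complex" and d :: "nat \<Rightarrow> complex"
  assumes orth: "\<forall>q<n. \<forall>q'<n. (\<Sum>p<n. V q p * cnj (V q' p)) = (if q = q' then 1 else 0)"
  shows "(\<Sum>p<n. (cmod (\<Sum>q<n. d q * V q p))\<^sup>2) = (\<Sum>q<n. (cmod (d q))\<^sup>2)"
proof -
  have "complex_of_real (\<Sum>p<n. (cmod (\<Sum>q<n. d q * V q p))\<^sup>2)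
      = (\<Sum>p<n. (\<Sum>q<n. d q * V q p) * cnj (\<Sum>q'<n. d q' * V q' p))"
    unfolding of_real_sum complex_norm_square ..
  also have "\<dots> = (\<Sum>p<n. \<Sum>q<n. \<Sum>q'<n. d q * cnj (d q') * (V q p * cnj (V q' p)))"
    unfolding cnj_sum sum_product complex_cnj_mult by (simp add: mult_ac)
  also have "\<dots> = (\<Sum>q<n. \<Sum>q'<n. \<Sum>p<n. d q * cnj (d q') * (V q p * cnj (V q' p)))"
    by (subst sum.swap, rule sum.cong[OF refl], rule sum.swap)
  also have "\<dots> = (\<Sum>q<n. \<Sum>q'<n. d q * cnj (d q') * (\<Sum>p<n. V q p * cnj (V q' p)))"
    by (simp only: sum_distrib_left)
  also have "\<dots> = (\<Sum>q<n. \<Sum>q'<n. d q * cnj (d q') * (if q = q' then 1 else 0))"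
    using orth by (intro sum.cong refl) auto
  also have "\<dots> = (\<Sum>q<n. d q * cnj (d q))"
    by (simp add: if_distrib cong: if_cong)
  also have "\<dots> = complex_of_real (\<Sum>q<n. (cmod (d q))\<^sup>2)"
    unfolding of_real_sum complex_norm_square ..
  finally show ?thesis by (simp only: of_real_eq_iff)
qed

definition Sq :: "('a, 'b, complex) fst \<Rightarrow> 'a tsym \<Rightarrow> (nat \<Rightarrow> 'b list \<Rightarrow> complex) \<Rightarrow> nat \<Rightarrow> 'b list \<Rightarrow> complex" where
  "Sq T a c = (\<lambda>p u. if halting T p then 0 else qstep T a c p u)"

fun Sw :: "('a, 'b, complex) fst \<Rightarrow> 'a tsym list \<Rightarrow> (nat \<Rightarrow> 'b list \<Rightarrow> complex) \<Rightarrow> nat \<Rightarrow> 'b list \<Rightarrow> complex" where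
  "Sw T [] c = c"
| "Sw T (a # as) c = Sw T as (Sq T a c)"

definition Nm :: "('a, bool, complex) fst \<Rightarrow> (nat \<Rightarrow> bool list \<Rightarrow> complex) \<Rightarrow> real" where
  "Nm T c = (\<Sum>q<nstates T. (cmod (c q []))\<^sup>2 + (cmod (c q [True]))\<^sup>2)"

definition accv :: "('a, bool, complex) fst \<Rightarrow> 'a tsym \<Rightarrow> (nat \<Rightarrow> bool list \<Rightarrow> complex) \<Rightarrow> real" where
  "accv T a c = (\<Sum>p\<in>acc T. (cmod (qstep T a c p [True]))\<^sup>2)"

lemma qacc_Cons: "qacc T (a # as) c [True] = accv T a c + qacc T as (Sq T a c) [True]"
  by (simp add: accv_def Sq_def)

lemma qacc_append: "qacc T (as @ bs) c x = qacc T as c x + qacc T bs (Sw T as c) x"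
  by (induction as arbitrary: c) (simp_all add: Sq_def)

lemma qacc_nonneg: "qacc T as c x \<ge> 0"
  by (induction as arbitrary: c) (simp_all add: sum_nonneg)

lemma qacc_REnd: "qacc T [REnd] c [True] = accv T REnd c"
  by (simp add: accv_def)

lemma Sw_append: "Sw T (as @ bs) c = Sw T bs (Sw T as c)"
  by (induction as arbitrary: c) simp_all

lemma qstep_diff: "qstep T a (\<lambda>q u. c1 q u - c2 q u) p u = qstep T a c1 p u - qstep T a c2 p u"
  unfolding qstep_def by (simp add: sum_subtractf[symmetric] algebra_simps if_distrib cong: if_cong)

lemma qstep_add: "qstep T a (\<lambda>q u. c1 q u + c2 q u) p u = qstep T a c1 p u + qstep T a c2 p u"
  unfolding qstep_def by (simp add: sum.distrib[symmetric] algebra_simps if_distrib cong: if_cong)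

lemma Sq_diff: "Sq T a (\<lambda>q u. c1 q u - c2 q u) = (\<lambda>p u. Sq T a c1 p u - Sq T a c2 p u)"
  unfolding Sq_def by (simp add: qstep_diff fun_eq_iff)

lemma Sq_add: "Sq T a (\<lambda>q u. c1 q u + c2 q u) = (\<lambda>p u. Sq T a c1 p u + Sq T a c2 p u)"
  unfolding Sq_def by (simp add: qstep_add fun_eq_iff)

lemma Sw_diff: "Sw T as (\<lambda>q u. c1 q u - c2 q u) = (\<lambda>p u. Sw T as c1 p u - Sw T as c2 p u)"
  by (induction as arbitrary: c1 c2) (simp_all add: Sq_diff)

lemma Sw_add: "Sw T as (\<lambda>q u. c1 q u + c2 q u) = (\<lambda>p u. Sw T as c1 p u + Sw T as c2 p u)"
  by (induction as arbitrary: c1 c2) (simp_all add: Sq_add)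

lemma suffix_single: "suffix xs [y] \<longleftrightarrow> xs = [] \<or> xs = [y]"
  by (auto simp: suffix_def Cons_eq_append_conv)

lemma qstep_nil: "qstep T a c p [] =
   (\<Sum>q<nstates T. (if out T a q = [] then c q [] else 0) * trans T a q p)"
  unfolding qstep_def by (intro sum.cong refl) auto

lemma qstep_one: "qstep T a c p [True] =
   (\<Sum>q<nstates T. (if out T a q = [] then c q [True] else if out T a q = [True] then c q [] else 0) * trans T a q p)"
  unfolding qstep_def by (intro sum.cong refl) (auto simp: suffix_single)

lemma step_bound:
  assumes "is_qfst T"
  shows "(\<Sum>p<nstates T. (cmod (qstep T a c p []))\<^sup>2) + (\<Sum>p<nstates T. (cmod (qstep T a c p [True]))\<^sup>2) \<le> Nm T c"
proof -
  have orth: "\<forall>q<nstates T. \<forall>q'<nstates T. (\<Sum>p<nstates T. trans T a q p * cnj (trans T a q' p)) = (if q = q' then 1 else 0)"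
    using assms unfolding is_qfst_def by blast
  have "(\<Sum>p<nstates T. (cmod (qstep T a c p []))\<^sup>2) + (\<Sum>p<nstates T. (cmod (qstep T a c p [True]))\<^sup>2)
     = (\<Sum>q<nstates T. (cmod (if out T a q = [] then c q [] else 0))\<^sup>2) +
       (\<Sum>q<nstates T. (cmod (if out T a q = [] then c q [True] else if out T a q = [True] then c q [] else 0))\<^sup>2)"
    unfolding qstep_nil qstep_one by (simp only: unit_sum[OF orth])
  also have "\<dots> = (\<Sum>q<nstates T. (cmod (if out T a q = [] then c q [] else 0))\<^sup>2 +
       (cmod (if out T a q = [] then c q [True] else if out T a q = [True] then c q [] else 0))\<^sup>2)"
    by (simp add: sum.distrib)
  also have "\<dots> \<le> Nm T c"
    unfolding Nm_def by (intro sum_mono) auto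
  finally show ?thesis .
qed

lemma Nm_nonneg: "Nm T c \<ge> 0"
  unfolding Nm_def by (intro sum_nonneg) auto

lemma Sq_contr:
  assumes "is_qfst T"
  shows "Nm T (Sq T a c) \<le> Nm T c"
proof -
  have "Nm T (Sq T a c) \<le> (\<Sum>p<nstates T. (cmod (qstep T a c p []))\<^sup>2) + (\<Sum>p<nstates T. (cmod (qstep T a c p [True]))\<^sup>2)"
    unfolding Nm_def Sq_def sum.distrib[symmetric] by (intro sum_mono) auto
  then show ?thesis using step_bound[OF assms, of a c] by linarith
qed

lemma accv_le:
  assumes "is_qfst T"
  shows "accv T a c \<le> Nm T c"
proof -
  have sub: "acc T \<subseteq> {..<nstates T}" using assms unfolding is_qfst_def well_formed_def by blast
  have "accv T a c \<le> (\<Sum>p<nstates T. (cmod (qstep T a c p [True]))\<^sup>2)"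
    unfolding accv_def by (rule sum_mono2[OF _ sub]) auto
  moreover have "(\<Sum>p<nstates T. (cmod (qstep T a c p []))\<^sup>2) \<ge> 0" by (intro sum_nonneg) auto
  ultimately show ?thesis using step_bound[OF assms, of a c] by linarith
qed

lemma Sw_contr:
  assumes "is_qfst T"
  shows "Nm T (Sw T as c) \<le> Nm T c"
proof (induction as arbitrary: c)
  case Nil then show ?case by simp
next
  case (Cons a as)
  then show ?case using Sq_contr[OF assms, of a c] by (simp, smt (verit))
qed

lemma cmod_parallel: "(cmod (u + v))\<^sup>2 + (cmod (u - v))\<^sup>2 = 2 * (cmod u)\<^sup>2 + 2 * (cmod v)\<^sup>2"
  by (simp only: cmod_power2) (simp add: power2_eq_square algebra_simps)

lemma Nm_parallel: "Nm T (\<lambda>q u. a q u + b q u) + Nm T (\<lambda>q u. a q u - b q u) = 2 * Nm T a + 2 * Nm T b"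
  unfolding Nm_def sum.distrib[symmetric] sum_distrib_left
proof (intro sum.cong refl)
  fix x
  show "(cmod (a x [] + b x []))\<^sup>2 + (cmod (a x [True] + b x [True]))\<^sup>2 +
         ((cmod (a x [] - b x []))\<^sup>2 + (cmod (a x [True] - b x [True]))\<^sup>2) =
        2 * ((cmod (a x []))\<^sup>2 + (cmod (a x [True]))\<^sup>2) +
        2 * ((cmod (b x []))\<^sup>2 + (cmod (b x [True]))\<^sup>2)"
    using cmod_parallel[of "a x []" "b x []"] cmod_parallel[of "a x [True]" "b x [True]"] by argo
qed

lemma Sw_diff_bound:
  assumes "is_qfst T"
  shows "Nm T (\<lambda>q u. a q u - b q u) \<le> Nm T (\<lambda>q u. Sw T as a q u - Sw T as b q u)
          + 2 * (Nm T a - Nm T (Sw T as a)) + 2 * (Nm T b - Nm T (Sw T as b))"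
proof -
  have 1: "Nm T (Sw T as (\<lambda>q u. a q u + b q u)) \<le> Nm T (\<lambda>q u. a q u + b q u)"
    by (rule Sw_contr[OF assms])
  have 2: "Nm T (\<lambda>q u. Sw T as a q u + Sw T as b q u) + Nm T (\<lambda>q u. Sw T as a q u - Sw T as b q u)
     = 2 * Nm T (Sw T as a) + 2 * Nm T (Sw T as b)" by (rule Nm_parallel)
  have 3: "Nm T (\<lambda>q u. a q u + b q u) + Nm T (\<lambda>q u. a q u - b q u) = 2 * Nm T a + 2 * Nm T b"
    by (rule Nm_parallel)
  have 4: "Nm T (Sw T as (\<lambda>q u. a q u + b q u)) = Nm T (\<lambda>q u. Sw T as a q u + Sw T as b q u)"
    by (simp only: Sw_add)
  show ?thesis using 1 2 3 4 by argo
qed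

lemma R5_iff: "(v, w) \<in> R5 \<longleftrightarrow> v \<noteq> [] \<and> w = [last v]"
  unfolding R5_def
  by (auto, metis append_butlast_last_id)


lemma sq_split_real:
  fixes A B t :: real
  assumes t: "t > 0"
  shows "(A + B)\<^sup>2 \<le> (1 + t) * A\<^sup>2 + (1 + 1 / t) * B\<^sup>2"
proof -
  have e: "(1 + t) * A\<^sup>2 + (1 + 1 / t) * B\<^sup>2 - (A + B)\<^sup>2 = (t * A - B)\<^sup>2 / t"
    using t by (simp add: field_simps power2_eq_square)
  have "(t * A - B)\<^sup>2 / t \<ge> 0" using t by simp
  then show ?thesis using e by linarith
qed

lemma sq_split:
  fixes u v :: complex and t :: real
  assumes t: "t > 0"
  shows "(cmod u)\<^sup>2 \<le> (1 + t) * (cmod v)\<^sup>2 + (1 + 1 / t) * (cmod (u - v))\<^sup>2"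
proof -
  have "cmod u \<le> cmod v + cmod (u - v)" using norm_triangle_ineq[of v "u - v"] by simp
  then have "(cmod u)\<^sup>2 \<le> (cmod v + cmod (u - v))\<^sup>2" by (intro power_mono) auto
  also have "\<dots> \<le> (1 + t) * (cmod v)\<^sup>2 + (1 + 1 / t) * (cmod (u - v))\<^sup>2"
    by (rule sq_split_real[OF t])
  finally show ?thesis .
qed

lemma accv_split:
  assumes t: "t > 0"
  shows "accv T a c1 \<le> (1 + t) * accv T a c2 + (1 + 1 / t) * accv T a (\<lambda>q u. c1 q u - c2 q u)"
  unfolding accv_def qstep_diff sum_distrib_left sum.distrib[symmetric]
  by (intro sum_mono sq_split t)


lemma sq_less: "\<bar>x::real\<bar> < h \<Longrightarrow> x\<^sup>2 < h\<^sup>2"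
proof -
  assume a: "\<bar>x\<bar> < h"
  have "\<bar>x\<bar>\<^sup>2 < h\<^sup>2" by (rule power_strict_mono[OF a]) simp_all
  then show ?thesis by simp
qed


lemma floor_close:
  fixes x y h :: real
  assumes h: "h > 0" and eq: "\<lfloor>x / h\<rfloor> = \<lfloor>y / h\<rfloor>"
  shows "\<bar>x - y\<bar> < h"
proof -
  have "x / h < \<lfloor>x / h\<rfloor> + 1" "y / h < \<lfloor>y / h\<rfloor> + 1"
    "of_int \<lfloor>x / h\<rfloor> \<le> x / h" "of_int \<lfloor>y / h\<rfloor> \<le> y / h" by linarith+
  then have "x / h < y / h + 1" "y / h < x / h + 1" using eq by linarith+
  then have "x / h * h < (y / h + 1) * h" "y / h * h < (x / h + 1) * h"
    using h mult_strict_right_mono by blast+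
  then have "x < y + h" "y < x + h" using h by (simp_all add: distrib_right)
  then show ?thesis by linarith
qed

lemma cmod_close:
  assumes h: "h > 0" and "\<lfloor>Re z / h\<rfloor> = \<lfloor>Re z' / h\<rfloor>" "\<lfloor>Im z / h\<rfloor> = \<lfloor>Im z' / h\<rfloor>"
  shows "(cmod (z - z'))\<^sup>2 \<le> 2 * h\<^sup>2"
proof -
  have "(Re z - Re z')\<^sup>2 < h\<^sup>2" "(Im z - Im z')\<^sup>2 < h\<^sup>2"
    using floor_close[OF h assms(2)] floor_close[OF h assms(3)] sq_less by auto
  then show ?thesis by (simp add: cmod_power2)
qed


lemma floor_bound:
  fixes x h :: real
  assumes h: "h > 0" and x: "\<bar>x\<bar> \<le> 1"
  shows "\<lfloor>x / h\<rfloor> \<in> {-(\<lceil>1 / h\<rceil> + 1)..\<lceil>1 / h\<rceil> + 1}"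
proof -
  have "x \<le> 1" "-1 \<le> x" using x by linarith+
  then have "x / h \<le> 1 / h" "-1 / h \<le> x / h"
    using h divide_right_mono[of x 1 h] divide_right_mono[of "-1" x h] by simp_all
  moreover have "x / h < \<lfloor>x / h\<rfloor> + 1" "of_int \<lfloor>x / h\<rfloor> \<le> x / h" "1 / h \<le> \<lceil>1 / h\<rceil>" by linarith+
  ultimately have "real_of_int (-(\<lceil>1 / h\<rceil> + 1)) \<le> real_of_int \<lfloor>x / h\<rfloor>"
    "real_of_int \<lfloor>x / h\<rfloor> \<le> real_of_int (\<lceil>1 / h\<rceil> + 1)" by linarith+
  then show ?thesis by (simp only: of_int_le_iff atLeastAtMost_iff)
qed

lemma qfst_impossible:
  assumes "qfst_computes_isolated (T :: (bool, bool, complex) fst) R5"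
  shows False
proof -
  from assms obtain \<alpha> \<epsilon> where Tq: "is_qfst T" and \<epsilon>: "\<epsilon> > 0"
    and hi: "\<And>v w. (v, w) \<in> R5 \<Longrightarrow> qprob T w v \<ge> \<alpha> + \<epsilon>"
    and lo: "\<And>v w. (v, w) \<notin> R5 \<Longrightarrow> qprob T w v \<le> \<alpha> - \<epsilon>"
    unfolding qfst_computes_isolated_def by blast
  define n where "n = nstates T"
  have init: "init T < n" using Tq unfolding is_qfst_def well_formed_def n_def by auto
  then have n1: "n \<ge> 1" by simp
  define c0 :: "nat \<Rightarrow> bool list \<Rightarrow> complex" where "c0 = (\<lambda>q u. if q = init T \<and> u = [] then 1 else 0)"
  define \<psi> where "\<psi> = Sq T LEnd c0"
  have Nc0: "Nm T c0 \<le> 1"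
  proof -
    have "Nm T c0 = (\<Sum>q<n. if q = init T then 1 else 0)"
      unfolding Nm_def c0_def n_def by (intro sum.cong refl) auto
    also have "\<dots> = 1" using init by simp
    finally show ?thesis by simp
  qed
  define f where "f z = Nm T (Sw T (map Sym z) \<psi>)" for z
  have fle: "f z \<le> 1" for z
    using Sw_contr[OF Tq, of "map Sym z" \<psi>] Sq_contr[OF Tq, of LEnd c0] Nc0
    unfolding f_def \<psi>_def by linarith
  define \<mu> where "\<mu> = Inf (range f)"
  have bdd: "bdd_below (range f)"
    by (rule bdd_belowI[of _ 0]) (auto simp: f_def Nm_nonneg)
  have f\<mu>: "\<mu> \<le> f z" for z unfolding \<mu>_def by (rule cInf_lower[OF _ bdd]) simp
  define D where "D = \<epsilon> * \<epsilon> / (1 + \<epsilon>)"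
  have D0: "D > 0" using \<epsilon> unfolding D_def by simp
  have D\<epsilon>: "(1 + 1 / \<epsilon>) * D = \<epsilon>"
  proof -
    have 1: "1 + 1 / \<epsilon> = (1 + \<epsilon>) / \<epsilon>" using \<epsilon> by (simp add: add_divide_distrib)
    have 2: "(1 + \<epsilon>) / \<epsilon> * (\<epsilon> * \<epsilon> / (1 + \<epsilon>)) = ((1 + \<epsilon>) * (\<epsilon> * \<epsilon>)) / (\<epsilon> * (1 + \<epsilon>))"
      by (simp only: times_divide_times_eq)
    also have "\<dots> = \<epsilon>" using \<epsilon> by (simp add: power2_eq_square)
    finally show ?thesis using 1 unfolding D_def by simp
  qed
  define \<eta> where "\<eta> = D / 16"
  have "Inf (range f) < \<mu> + \<eta>" using D0 unfolding \<mu>_def \<eta>_def by simp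
  moreover have ne: "range f \<noteq> {}" by simp
  ultimately have "\<exists>x\<in>range f. x < \<mu> + \<eta>" using cInf_less_iff[OF ne bdd] by blast
  then obtain y where y: "f y < \<mu> + \<eta>" by blast
  define \<phi> where "\<phi> k = Sw T (map Sym (y @ True # replicate k False)) \<psi>" for k
  have \<phi>_rec: "\<phi> k = Sw T (replicate k (Sym False)) (\<phi> 0)" for k
    unfolding \<phi>_def by (simp add: Sw_append[symmetric])
  have \<phi>_le: "Nm T (\<phi> k) \<le> f y" for k
    unfolding \<phi>_def f_def using Sw_contr[OF Tq, of "map Sym (True # replicate k False)" "Sw T (map Sym y) \<psi>"]
    by (simp add: Sw_append)
  have \<phi>_ge: "\<mu> \<le> Nm T (\<phi> k)" for k
    using f\<mu>[of "y @ True # replicate k False"] unfolding f_def \<phi>_def by simp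
  have \<phi>1: "Nm T (\<phi> k) \<le> 1" for k using \<phi>_le[of k] fle[of y] by linarith
  define h where "h = min 1 (D / (16 * n))"
  have h0: "h > 0" using D0 n1 unfolding h_def by auto
  have h1: "h \<le> 1" unfolding h_def by auto
  have h2: "4 * n * h\<^sup>2 \<le> D / 4"
  proof -
    have "h\<^sup>2 \<le> h" using h0 h1 by (simp add: power2_eq_square mult_le_cancel_left1)
    also have "h \<le> D / (16 * n)" unfolding h_def by auto
    finally have "4 * n * h\<^sup>2 \<le> 4 * n * (D / (16 * n))" by (intro mult_left_mono) auto
    also have "\<dots> = D / 4" using n1 by (simp add: field_simps)
    finally show ?thesis .
  qed
  have cm1: "cmod (\<phi> k q u) \<le> 1" if "q < n" "u = [] \<or> u = [True]" for k q u
  proof -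
    have "(cmod (\<phi> k q u))\<^sup>2 \<le> (cmod (\<phi> k q []))\<^sup>2 + (cmod (\<phi> k q [True]))\<^sup>2"
      using that by auto
    also have "\<dots> \<le> Nm T (\<phi> k)"
      unfolding Nm_def n_def[symmetric]
      by (rule member_le_sum[where f = "\<lambda>q. (cmod (\<phi> k q []))\<^sup>2 + (cmod (\<phi> k q [True]))\<^sup>2"]) (use that in auto)
    also have "\<dots> \<le> 1" by (rule \<phi>1)
    finally show ?thesis by (simp add: power_le_one_iff)
  qed
  define L where "L = List.product [0..<n] [[], [True]]"
  define g where "g k = map (\<lambda>(q, u). (\<lfloor>Re (\<phi> k q u) / h\<rfloor>, \<lfloor>Im (\<phi> k q u) / h\<rfloor>)) L" for k
  define K :: int where "K = \<lceil>1 / h\<rceil> + 1"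
  define G where "G = {xs. set xs \<subseteq> {-K..K} \<times> {-K..K} \<and> length xs = length L}"
  have finG: "finite G" unfolding G_def by (rule finite_lists_length_eq) auto
  have gG: "g k \<in> G" for k
  proof -
    have "x \<in> {-K..K} \<times> {-K..K}" if "x \<in> set (g k)" for x
    proof -
      from that obtain q u where qu: "(q, u) \<in> set L"
        and x: "x = (\<lfloor>Re (\<phi> k q u) / h\<rfloor>, \<lfloor>Im (\<phi> k q u) / h\<rfloor>)"
        unfolding g_def by auto
      have "q < n" "u = [] \<or> u = [True]" using qu unfolding L_def by auto
      then have c: "cmod (\<phi> k q u) \<le> 1" by (rule cm1)
      have "\<bar>Re (\<phi> k q u)\<bar> \<le> 1" "\<bar>Im (\<phi> k q u)\<bar> \<le> 1"
        using c abs_Re_le_cmod abs_Im_le_cmod order_trans by blast+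
      then show ?thesis unfolding x K_def using floor_bound[OF h0] by auto
    qed
    then have "set (g k) \<subseteq> {-K..K} \<times> {-K..K}" by blast
    moreover have "length (g k) = length L" unfolding g_def by simp
    ultimately show ?thesis unfolding G_def by blast
  qed
  have "\<not> inj g"
  proof
    assume "inj g"
    moreover have "range g \<subseteq> G" using gG by blast
    then have "finite (range g)" using finG by (rule finite_subset)
    ultimately have "finite (UNIV :: nat set)" using finite_imageD by blast
    then show False by simp
  qed
  then obtain a b where ab: "g a = g b" "a \<noteq> b" unfolding inj_def by blast
  define i where "i = min a b"
  define j where "j = max a b"
  have ij: "i < j" "g i = g j" using ab unfolding i_def j_def by (auto simp: min_def max_def)
  have close: "Nm T (\<lambda>q u. \<phi> i q u - \<phi> j q u) \<le> 4 * n * h\<^sup>2"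
  proof -
    have eqs: "\<lfloor>Re (\<phi> i q u) / h\<rfloor> = \<lfloor>Re (\<phi> j q u) / h\<rfloor> \<and> \<lfloor>Im (\<phi> i q u) / h\<rfloor> = \<lfloor>Im (\<phi> j q u) / h\<rfloor>"
      if "(q, u) \<in> set L" for q u
    proof -
      have "\<forall>x\<in>set L. (\<lambda>(q, u). (\<lfloor>Re (\<phi> i q u) / h\<rfloor>, \<lfloor>Im (\<phi> i q u) / h\<rfloor>)) x
                 = (\<lambda>(q, u). (\<lfloor>Re (\<phi> j q u) / h\<rfloor>, \<lfloor>Im (\<phi> j q u) / h\<rfloor>)) x"
        using ij(2) unfolding g_def map_eq_conv .
      from this[rule_format, OF that] show ?thesis by simp
    qed
    have "Nm T (\<lambda>q u. \<phi> i q u - \<phi> j q u) \<le> (\<Sum>q<n. 2 * h\<^sup>2 + 2 * h\<^sup>2)"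
      unfolding Nm_def n_def[symmetric]
    proof (intro sum_mono add_mono)
      fix q assume "q \<in> {..<n}"
      then have "(q, []) \<in> set L" "(q, [True]) \<in> set L" unfolding L_def by auto
      then show "(cmod (\<phi> i q [] - \<phi> j q []))\<^sup>2 \<le> 2 * h\<^sup>2"
        "(cmod (\<phi> i q [True] - \<phi> j q [True]))\<^sup>2 \<le> 2 * h\<^sup>2"
        using cmod_close[OF h0 conjunct1[OF eqs] conjunct2[OF eqs]] by auto
    qed
    also have "\<dots> = 4 * n * h\<^sup>2" by simp
    finally show ?thesis .
  qed
  define m where "m = j - i"
  have m1: "m \<ge> 1" and jm: "j = m + i" using ij(1) unfolding m_def by arith+
  have Ti: "Sw T (replicate i (Sym False)) (\<phi> 0) = \<phi> i" by (rule \<phi>_rec[symmetric])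
  have "Sw T (replicate i (Sym False)) (\<phi> m) = Sw T (replicate m (Sym False) @ replicate i (Sym False)) (\<phi> 0)"
    by (simp only: \<phi>_rec[of m] Sw_append)
  also have "\<dots> = \<phi> j" by (simp only: replicate_add[symmetric] jm[symmetric] \<phi>_rec[of j, symmetric])
  finally have Tj: "Sw T (replicate i (Sym False)) (\<phi> m) = \<phi> j" .
  have diff: "Nm T (\<lambda>q u. \<phi> 0 q u - \<phi> m q u) \<le> D / 2"
  proof -
    have "Nm T (\<lambda>q u. \<phi> 0 q u - \<phi> m q u) \<le> Nm T (\<lambda>q u. \<phi> i q u - \<phi> j q u)
          + 2 * (Nm T (\<phi> 0) - Nm T (\<phi> i)) + 2 * (Nm T (\<phi> m) - Nm T (\<phi> j))"
      using Sw_diff_bound[OF Tq, of "\<phi> 0" "\<phi> m" "replicate i (Sym False)"] unfolding Ti Tj .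
    then show ?thesis using close h2 \<phi>_le[of 0] \<phi>_le[of m] \<phi>_ge[of i] \<phi>_ge[of j] y
      unfolding \<eta>_def by argo
  qed
  have qp: "qprob T [True] v = qacc T [LEnd] c0 [True] + qacc T (map Sym v) \<psi> [True]
              + accv T REnd (Sw T (map Sym v) \<psi>)" for v
  proof -
    have "tape v = [LEnd] @ (map Sym v @ [REnd])" unfolding tape_def by simp
    then show ?thesis unfolding qprob_def c0_def[symmetric]
      by (simp only: qacc_append qacc_REnd) (simp add: \<psi>_def)
  qed
  define v1 where "v1 = y @ [True]"
  define v2 where "v2 = y @ True # replicate m False"
  have "(v1, [True]) \<in> R5" unfolding R5_iff v1_def by simp
  then have A1: "qprob T [True] v1 \<ge> \<alpha> + \<epsilon>" by (rule hi)
  have "last v2 = False" using m1 unfolding v2_def by (cases m) auto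
  then have "(v2, [True]) \<notin> R5" unfolding R5_iff by auto
  then have A2: "qprob T [True] v2 \<le> \<alpha> - \<epsilon>" by (rule lo)
  have s1: "Sw T (map Sym v1) \<psi> = \<phi> 0" unfolding v1_def \<phi>_def by simp
  have s2: "Sw T (map Sym v2) \<psi> = \<phi> m" unfolding v2_def \<phi>_def by simp
  have "map Sym v2 = map Sym v1 @ map Sym (replicate m False)" unfolding v1_def v2_def by simp
  then have "qacc T (map Sym v2) \<psi> [True] \<ge> qacc T (map Sym v1) \<psi> [True]"
    using qacc_nonneg by (simp add: qacc_append)
  then have gap: "accv T REnd (\<phi> 0) - accv T REnd (\<phi> m) \<ge> 2 * \<epsilon>"
    using A1 A2 qp[of v1] qp[of v2] unfolding s1 s2 by linarith
  have sp: "accv T REnd (\<phi> 0) \<le> (1 + \<epsilon>) * accv T REnd (\<phi> m) + (1 + 1 / \<epsilon>) * accv T REnd (\<lambda>q u. \<phi> 0 q u - \<phi> m q u)"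
    by (rule accv_split[OF \<epsilon>])
  have b1: "accv T REnd (\<phi> m) \<le> 1" using accv_le[OF Tq] \<phi>1 order_trans by blast
  have "accv T REnd (\<lambda>q u. \<phi> 0 q u - \<phi> m q u) \<le> D / 2" using accv_le[OF Tq] diff order_trans by blast
  then have "(1 + 1 / \<epsilon>) * accv T REnd (\<lambda>q u. \<phi> 0 q u - \<phi> m q u) \<le> (1 + 1 / \<epsilon>) * (D / 2)"
    using \<epsilon> by (intro mult_left_mono) auto
  also have "\<dots> = \<epsilon> / 2" using D\<epsilon> by simp
  finally have "(1 + 1 / \<epsilon>) * accv T REnd (\<lambda>q u. \<phi> 0 q u - \<phi> m q u) \<le> \<epsilon> / 2" .
  moreover have "\<epsilon> * accv T REnd (\<phi> m) \<le> \<epsilon>" using b1 \<epsilon> by simp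
  moreover have "(1 + \<epsilon>) * accv T REnd (\<phi> m) = accv T REnd (\<phi> m) + \<epsilon> * accv T REnd (\<phi> m)"
    by (simp add: algebra_simps)
  ultimately show False using sp gap \<epsilon> by argo
qed


definition Dst :: "bool \<Rightarrow> nat" where "Dst b = (if b then 2 else 1)"

definition DD :: "(bool, bool, real) fst" where
 "DD = \<lparr> nstates = 5,
        trans = (\<lambda>a q p. case a of Sym b \<Rightarrow> (if p = Dst b then 1 else 0)
                                | LEnd \<Rightarrow> (if p = 0 then 1 else 0)
                                | REnd \<Rightarrow> (if p = (if q = 1 \<or> q = 2 then 3 else 4) then 1 else 0)),
        out = (\<lambda>a q. case a of REnd \<Rightarrow> (if q = 1 then [False] else if q = 2 then [True] else []) | _ \<Rightarrow> []),
        init = 0, acc = {3}, rej = {4} \<rparr>"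

definition ds :: "nat \<Rightarrow> nat \<Rightarrow> bool list \<Rightarrow> real" where
  "ds s = (\<lambda>p u. if p = s \<and> u = [] then 1 else 0)"

lemma five: "{..<5::nat} = {0,1,2,3,4}" by auto

lemma DD_simps[simp]: "nstates DD = 5" "acc DD = {3}" "rej DD = {4}" "init DD = 0"
  "trans DD (Sym b) q p = (if p = Dst b then 1 else 0)"
  "trans DD LEnd q p = (if p = 0 then 1 else 0)"
  "trans DD REnd q p = (if p = (if q = 1 \<or> q = 2 then 3 else 4) then 1 else 0)"
  "out DD (Sym b) q = []" "out DD LEnd q = []"
  "out DD REnd q = (if q = 1 then [False] else if q = 2 then [True] else [])"
  by (simp_all add: DD_def)

lemma DD_dfst: "is_dfst DD"
  unfolding is_dfst_def is_pfst_def well_formed_def halting_def DD_def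
  by (auto simp: five Dst_def split: tsym.splits)

lemma DD_Sym: "s < 5 \<Longrightarrow> (\<lambda>p u. if halting DD p then 0 else pstep DD (Sym b) (ds s) p u) = ds (Dst b)"
  unfolding pstep_def halting_def ds_def
  by (auto simp: five Dst_def intro!: ext)

lemma DD_LEnd: "s < 5 \<Longrightarrow> (\<lambda>p u. if halting DD p then 0 else pstep DD LEnd (ds s) p u) = ds 0"
  unfolding pstep_def halting_def ds_def
  by (auto simp: five Dst_def intro!: ext)

lemma DD_acc_Sym: "s < 5 \<Longrightarrow> pacc DD (Sym b # as) (ds s) x = pacc DD as (ds (Dst b)) x"
proof -
  assume s: "s < 5"
  have "(\<Sum>p\<in>acc DD. pstep DD (Sym b) (ds s) p x) = 0"
    by (simp add: pstep_def ds_def five Dst_def)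
  then show ?thesis by (simp only: pacc.simps DD_Sym[OF s])
qed

lemma DD_acc_LEnd: "pacc DD (LEnd # as) (ds 0) x = pacc DD as (ds 0) x"
proof -
  have "(\<Sum>p\<in>acc DD. pstep DD LEnd (ds 0) p x) = 0"
    by (simp add: pstep_def ds_def five Dst_def)
  then show ?thesis by (simp only: pacc.simps DD_LEnd[of 0])
qed

lemma DD_REnd: "s = 0 \<or> s = 1 \<or> s = 2 \<Longrightarrow> pacc DD [REnd] (ds s) x =
   (if (s = 1 \<and> x = [False]) \<or> (s = 2 \<and> x = [True]) then 1 else 0)"
  apply (simp add: pstep_def ds_def five)
  apply (auto simp: suffix_def)
  done

lemma DD_word: "s = 0 \<or> s = 1 \<or> s = 2 \<Longrightarrow> pacc DD (map Sym v @ [REnd]) (ds s) x =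
   pacc DD [REnd] (ds (if v = [] then s else Dst (last v))) x"
proof (induction v arbitrary: s)
  case Nil then show ?case by simp
next
  case (Cons b v)
  have "pacc DD (map Sym (b # v) @ [REnd]) (ds s) x = pacc DD (map Sym v @ [REnd]) (ds (Dst b)) x"
    using Cons.prems DD_acc_Sym[of s b "map Sym v @ [REnd]" x] by auto
  also have "\<dots> = pacc DD [REnd] (ds (if v = [] then Dst b else Dst (last v))) x"
    by (rule Cons.IH) (auto simp: Dst_def)
  finally show ?case by simp
qed

lemma DD_computes: "dfst_computes DD R5"
  unfolding dfst_computes_def
proof (intro conjI allI DD_dfst)
  fix v w
  have i: "(\<lambda>q u. if q = init DD \<and> u = [] then 1 else 0) = ds 0"
    by (simp add: ds_def)
  have "pprob DD w v = pacc DD (LEnd # map Sym v @ [REnd]) (ds 0) w"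
    unfolding pprob_def tape_def i by simp
  also have "\<dots> = pacc DD (map Sym v @ [REnd]) (ds 0) w" by (rule DD_acc_LEnd)
  also have "\<dots> = pacc DD [REnd] (ds (if v = [] then 0 else Dst (last v))) w"
    by (rule DD_word) simp
  also have "\<dots> = (if (v, w) \<in> R5 then 1 else 0)"
    by (subst DD_REnd) (auto simp: Dst_def R5_iff)
  finally show "pprob DD w v = (if (v, w) \<in> R5 then 1 else 0)" .
qed

theorem theorem10:
  shows "\<not> (\<exists>T :: (bool, bool, complex) fst. qfst_computes_isolated T R5) \<and>
         (\<exists>T :: (bool, bool, real) fst. dfst_computes T R5)"
  using qfst_impossible DD_computes by blast

end
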